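(* Let $g$ be a probability density on $\mathbb{R}$ which is unimodal, symmetric about $0$, logconcave and positive on $\mathbb{R}$, and let $h=-\ln g$. If $h'$ is unbounded (i.e. $h'(x)\to\infty$ as $x\to\infty$), then for every $y>0$, $\lim_{x\to-\infty}\frac{\bar G(y-x)}{\bar G(-x)}=0$, and consequently the upper endpoint $u(x)$ of the HPD credible interval satisfies $u(x)\to0$ as $x\to-\infty$ (i.e. $a=0$).
   Context: $G$ is the cdf of $g$, $\bar G=1-G$, $G^{-1}$ its quantile function. For $X$ with density $g(x-\theta)$, $\theta\ge0$, and $\alpha\in(0,1)$, with $d_0=G^{-1}(\tfrac1{1+\alpha})$, the $100(1-\alpha)\%$ HPD Bayesian credible interval under the prior $1_{[0,\infty)}(\theta)$ has upper endpoint $u(x)=x-G^{-1}(\alpha G(x))$ for $x\le d_0$ and $u(x)=x+G^{-1}(\tfrac12+\tfrac{1-\alpha}2G(x))$ for $x>d_0$; $a=\lim_{x\to-\infty}u(x)$. The posterior of $\theta$ given $x$ has density $g(\theta-x)1_{[0,\infty)}(\theta)/G(x)$, so $P(\theta\ge y\mid x)=\bar G(y-x)/\bar G(-x)$ for $y\ge0$. *)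

theory Defs
  imports "HOL-Analysis.Analysis"
begin

definition cdf_of :: "(real \<Rightarrow> real) \<Rightarrow> real \<Rightarrow> real" where
  "cdf_of g x = (LBINT t:{..x}. g t)"

definition surv_of :: "(real \<Rightarrow> real) \<Rightarrow> real \<Rightarrow> real" where
  "surv_of g x = 1 - cdf_of g x"

definition quantile_of :: "(real \<Rightarrow> real) \<Rightarrow> real \<Rightarrow> real" where
  "quantile_of g p = Inf {x. cdf_of g x \<ge> p}"

text \<open>Upper endpoint of the 100(1-alpha)% HPD credible interval under the prior
  indicator of [0,\<infinity>).\<close>
definition hpd_upper :: "(real \<Rightarrow> real) \<Rightarrow> real \<Rightarrow> real \<Rightarrow> real" where
  "hpd_upper g \<alpha> x =
     (let G = cdf_of g; Ginv = quantile_of g; d0 = Ginv (1 / (1 + \<alpha>)) in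
      if x \<le> d0 then x - Ginv (\<alpha> * G x)
      else x + Ginv (1/2 + (1 - \<alpha>) / 2 * G x))"

end

theory Submission
  imports Defs
begin

lemma right_tangent:
  fixes f :: "real \<Rightarrow> real"
  assumes cvx: "convex_on UNIV f" and der: "(f has_real_derivative D) (at c within {c..})" and xc: "c < x"
  shows "D * (x - c) \<le> f x - f c"
proof -
  have "((\<lambda>y. (f y - f c) / (y - c)) \<longlongrightarrow> D) (at c within {c..})"
    using der unfolding has_field_derivative_iff by simp
  then have lim: "((\<lambda>y. (f y - f c) / (y - c)) \<longlongrightarrow> D) (at_right c)"
    by (rule tendsto_mono[rotated]) (auto intro: at_le)
  have "eventually (\<lambda>y. (f y - f c) / (y - c) \<le> (f x - f c) / (x - c)) (at_right c)"
    using eventually_at_right_real[OF xc]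
  proof eventually_elim
    fix y assume y: "y \<in> {c<..<x}"
    have "f y \<le> (f x - f c) / (x - c) * (y - c) + f c"
      using y by (intro convex_onD_Icc' convex_on_subset[OF cvx]) auto
    hence "f y - f c \<le> (f x - f c) / (x - c) * (y - c)" by simp
    thus "(f y - f c) / (y - c) \<le> (f x - f c) / (x - c)" using y xc by (simp add: field_split_simps)
  qed
  then have "D \<le> (f x - f c) / (x - c)"
    using lim by (intro tendsto_upperbound) auto
  thus ?thesis using xc by (simp add: field_simps)
qed

lemma split_int:
  fixes g :: "real \<Rightarrow> real"
  assumes "integrable lborel g"
  shows "(LBINT t. g t) = (LBINT t:{..x}. g t) + (LBINT t:{x<..}. g t)"
proof -
  have "(LBINT t:{..x}. g t) + (LBINT t:{x<..}. g t) = (LBINT t. indicator {..x} t *\<^sub>R g t + indicator {x<..} t *\<^sub>R g t)"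
    unfolding set_lebesgue_integral_def
    using integrable_mult_indicator[OF _ assms, of "{..x}"] integrable_mult_indicator[OF _ assms, of "{x<..}"]
    by (intro Bochner_Integration.integral_add[symmetric]) auto
  also have "\<dots> = (LBINT t. g t)"
    by (intro Bochner_Integration.integral_cong) (auto simp: indicator_def)
  finally show ?thesis by simp
qed

lemma surv_eq:
  fixes g :: "real \<Rightarrow> real"
  assumes "integrable lborel g" "(LBINT t. g t) = 1"
  shows "surv_of g x = (LBINT t:{x<..}. g t)"
  using split_int[OF assms(1), of x] assms(2) unfolding surv_of_def cdf_of_def by simp

lemma shift_int:
  fixes g :: "real \<Rightarrow> real"
  shows "(LBINT t:{a+y<..}. g t) = (LBINT t:{a<..}. g (t + y))"
  unfolding set_lebesgue_integral_def
  by (subst lborel_integral_real_affine[where c=1 and t=y]) (auto simp: indicator_def add.commute)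

lemma neg_int:
  fixes g :: "real \<Rightarrow> real"
  assumes "\<And>x. g (-x) = g x"
  shows "(LBINT t:{..x}. g t) = (LBINT t:{-x..}. g t)"
  unfolding set_lebesgue_integral_def
  by (subst lborel_integral_real_affine[where c="-1" and t=0]) (auto simp: indicator_def assms)

lemma point_int:
  fixes g :: "real \<Rightarrow> real"
  assumes [measurable]: "g \<in> borel_measurable borel"
  shows "(LBINT t:{a..}. g t) = (LBINT t:{a<..}. g t)"
  unfolding set_lebesgue_integral_def
  by (rule integral_cong_AE) (auto intro!: eventually_mono[OF AE_lborel_singleton[of a]] simp: indicator_def)

lemma set_int_nonneg:
  fixes g :: "real \<Rightarrow> real"
  assumes "\<And>x. g x > 0"
  shows "0 \<le> (LBINT t:A. g t)"
  unfolding set_lebesgue_integral_def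
  by (rule Bochner_Integration.integral_nonneg) (auto simp: indicator_def less_imp_le assms)

lemma tail_bound:
  fixes g h h' :: "real \<Rightarrow> real"
  assumes integrable: "integrable lborel g"
    and pos: "\<And>x. g x > 0"
    and h_def: "\<And>x. h x = - ln (g x)"
    and logconcave: "convex_on UNIV h"
    and h'_deriv: "\<And>x. (h has_real_derivative h' x) (at x within {x..})"
    and M: "\<And>s. s \<ge> u0 \<Longrightarrow> h' s \<ge> M" and y: "y > 0" and t: "t \<ge> u0"
  shows "(LBINT s:{t+y<..}. g s) \<le> exp (-M*y) * (LBINT s:{t<..}. g s)"
proof -
  have gi: "integrable lborel (\<lambda>s. g (s + y))"
    using lborel_integrable_real_affine[OF integrable, of 1 y] by (simp add: add.commute)
  have "(LBINT s:{t+y<..}. g s) = (LBINT s:{t<..}. g (s + y))" by (rule shift_int)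
  also have "\<dots> \<le> (LBINT s:{t<..}. exp (-M*y) * g s)"
  proof (rule set_integral_mono)
    show "set_integrable lborel {t<..} (\<lambda>s. g (s + y))"
      unfolding set_integrable_def by (rule integrable_mult_indicator[OF _ gi]) auto
    show "set_integrable lborel {t<..} (\<lambda>s. exp (-M*y) * g s)"
      unfolding set_integrable_def using integrable_mult_indicator[OF _ integrable, of "{t<..}"]
      by (intro set_integrable_mult_right[unfolded set_integrable_def]) auto
    fix s assume s: "s \<in> {t<..}"
    have "h' s * y \<le> h (s + y) - h s"
      using right_tangent[OF logconcave h'_deriv[of s], of "s + y"] y by simp
    moreover have "M * y \<le> h' s * y" using M[of s] s t y by (intro mult_right_mono) auto
    ultimately have "- h (s + y) \<le> - M * y + - h s" by linarith
    then have "exp (- h (s + y)) \<le> exp (- M * y + - h s)" by simp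
    also have "exp (- h (s + y)) = g (s + y)" using h_def pos by simp
    also have "exp (- M * y + - h s) = exp (-M*y) * g s" using h_def pos[of s] by (simp add: exp_add exp_diff exp_minus field_simps)
    finally show "g (s + y) \<le> exp (-M*y) * g s" .
  qed
  also have "\<dots> = exp (-M*y) * (LBINT s:{t<..}. g s)" by simp
  finally show ?thesis .
qed

lemma cdf_mono:
  fixes g :: "real \<Rightarrow> real"
  assumes integrable: "integrable lborel g" and pos: "\<And>x. g x > 0" and "a \<le> b"
  shows "cdf_of g a \<le> cdf_of g b"
  unfolding cdf_of_def set_lebesgue_integral_def
  using integrable_mult_indicator[OF _ integrable, of "{..a}"] integrable_mult_indicator[OF _ integrable, of "{..b}"]
    assms(3) pos[THEN less_imp_le]
  by (intro integral_mono) (auto simp: indicator_def)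

lemma cdf_pos:
  fixes g :: "real \<Rightarrow> real"
  assumes integrable: "integrable lborel g" and pos: "\<And>x. g x > 0"
    and unimodal_inc: "mono_on {..0} g" and x: "x \<le> 0"
  shows "cdf_of g x > 0"
proof -
  have "(LBINT t. g (x - 1) * indicator {x-1..x} t) \<le> (LBINT t. indicator {..x} t *\<^sub>R g t)"
  proof (rule integral_mono)
    show "integrable lborel (\<lambda>t. g (x - 1) * indicator {x-1..x} t)" by simp
    show "integrable lborel (\<lambda>t. indicator {..x} t *\<^sub>R g t)"
      by (rule integrable_mult_indicator[OF _ integrable]) auto
    fix t
    show "g (x - 1) * indicator {x-1..x} t \<le> indicator {..x} t *\<^sub>R g t"
    proof (cases "t \<in> {x-1..x}")
      case True
      then have "g (x - 1) \<le> g t" using x by (intro mono_onD[OF unimodal_inc]) auto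
      then show ?thesis using True by (simp add: indicator_def)
    next
      case False
      then show ?thesis using pos[of t] by (auto simp: indicator_def less_imp_le)
    qed
  qed
  moreover have "(LBINT t. g (x - 1) * indicator {x-1..x} t) = g (x - 1)" by simp
  ultimately show ?thesis using pos[of "x-1"] unfolding cdf_of_def set_lebesgue_integral_def by linarith
qed

theorem mainTheorem15:
  fixes g h h' :: "real \<Rightarrow> real" and \<alpha> :: real
  assumes meas: "g \<in> borel_measurable lborel"
    and integrable: "integrable lborel g"
    and total: "(LBINT t. g t) = 1"
    and pos: "\<And>x. g x > 0"
    and symm: "\<And>x. g (- x) = g x"
    and unimodal_inc: "mono_on {..0} g"
    and unimodal_dec: "antimono_on {0..} g"
    and h_def: "\<And>x. h x = - ln (g x)"
    and logconcave: "convex_on UNIV h"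
    and h'_deriv: "\<And>x. (h has_real_derivative h' x) (at x within {x..})"
    and h'_unbounded: "filterlim h' at_top at_top"
    and \<alpha>: "0 < \<alpha>" "\<alpha> < 1"
  shows "(\<forall>y>0. ((\<lambda>x. surv_of g (y - x) / surv_of g (- x)) \<longlongrightarrow> 0) at_bot)
         \<and> (hpd_upper g \<alpha> \<longlongrightarrow> 0) at_bot"
proof -
  have measb: "g \<in> borel_measurable borel" using meas by simp
  have surv: "\<And>z. surv_of g z = (LBINT t:{z<..}. g t)" by (rule surv_eq[OF integrable total])
  have cdf_surv: "\<And>z. cdf_of g z = surv_of g (- z)"
    unfolding surv cdf_of_def using neg_int[of g, OF symm] point_int[OF measb] by simp
  have part1: "((\<lambda>x. surv_of g (y - x) / surv_of g (- x)) \<longlongrightarrow> 0) at_bot" if y: "y > 0" for y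
  proof (rule tendstoI)
    fix e :: real assume e: "e > 0"
    define M where "M = (\<bar>ln e\<bar> + 1) / y"
    have M0: "M \<ge> 0" unfolding M_def using y by simp
    have "exp (- M * y) = exp (- (\<bar>ln e\<bar> + 1))" unfolding M_def using y by simp
    also have "\<dots> < exp (ln e)" by (subst exp_less_cancel_iff) linarith
    also have "\<dots> = e" using e by simp
    finally have Me: "exp (- M * y) < e" .
    have "eventually (\<lambda>s. M \<le> h' s) at_top"
      using h'_unbounded by (simp add: filterlim_at_top)
    then obtain u0 where u0: "\<And>s. s \<ge> u0 \<Longrightarrow> M \<le> h' s"
      by (auto simp: eventually_at_top_linorder)
    show "eventually (\<lambda>x. dist (surv_of g (y - x) / surv_of g (- x)) 0 < e) at_bot"
      unfolding eventually_at_bot_linorder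
    proof (intro exI allI impI)
      fix x assume x: "x \<le> - u0"
      have b: "surv_of g (y - x) \<le> exp (- M * y) * surv_of g (- x)"
        using tail_bound[OF integrable pos h_def logconcave h'_deriv u0 y, where t="-x"] x
        unfolding surv by (simp add: add.commute)
      have n1: "surv_of g (y - x) \<ge> 0" "surv_of g (- x) \<ge> 0"
        unfolding surv by (auto intro: set_int_nonneg pos)
      have "surv_of g (y - x) / surv_of g (- x) \<le> exp (- M * y)"
      proof (cases "surv_of g (- x) = 0")
        case True then show ?thesis by simp
      next
        case False then show ?thesis using n1 b by (simp add: divide_le_eq)
      qed
      moreover have "surv_of g (y - x) / surv_of g (- x) \<ge> 0" using n1 by simp
      ultimately show "dist (surv_of g (y - x) / surv_of g (- x)) 0 < e" using Me by simp
    qed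
  qed
  have part2: "(hpd_upper g \<alpha> \<longlongrightarrow> 0) at_bot"
  proof (rule tendstoI)
    fix e :: real assume e: "e > 0"
    define y where "y = e / 2"
    have y: "y > 0" using e by (simp add: y_def)
    define d0 where "d0 = quantile_of g (1 / (1 + \<alpha>))"
    have ev1: "eventually (\<lambda>x. surv_of g (y - x) / surv_of g (- x) < \<alpha>) at_bot"
      using order_tendstoD(2)[OF part1[OF y] \<alpha>(1)] .
    have ev2: "eventually (\<lambda>x. x \<le> min 0 d0) at_bot" by (rule eventually_le_at_bot)
    show "eventually (\<lambda>x. dist (hpd_upper g \<alpha> x) 0 < e) at_bot"
      using ev1 ev2
    proof eventually_elim
      case (elim x)
      have hx: "hpd_upper g \<alpha> x = x - quantile_of g (\<alpha> * cdf_of g x)"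
        using elim(2) unfolding hpd_upper_def d0_def Let_def by simp
      have Gx: "cdf_of g x > 0" using cdf_pos[OF integrable pos unimodal_inc] elim(2) by simp
      have Gxy: "cdf_of g (x - y) < \<alpha> * cdf_of g x"
        using elim(1) Gx unfolding cdf_surv by (simp add: divide_less_eq algebra_simps)
      define S where "S = {z. cdf_of g z \<ge> \<alpha> * cdf_of g x}"
      have lb: "z \<ge> x - y" if "z \<in> S" for z
      proof (rule ccontr)
        assume "\<not> z \<ge> x - y"
        then have "cdf_of g z \<le> cdf_of g (x - y)" by (intro cdf_mono[OF integrable pos]) auto
        then show False using that Gxy unfolding S_def by simp
      qed
      have xS: "x \<in> S" unfolding S_def using Gx \<alpha> by (simp add: mult_le_cancel_right1)
      have "Inf S \<le> x" using xS lb by (intro cInf_lower) (auto simp: bdd_below_def)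
      moreover have "Inf S \<ge> x - y" using xS lb by (intro cInf_greatest) auto
      moreover have "hpd_upper g \<alpha> x = x - Inf S" unfolding hx quantile_of_def S_def ..
      ultimately show ?case using y unfolding y_def by (simp add: dist_real_def)
    qed
  qed
  show ?thesis using part1 part2 by blast
qed

end
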